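(* For $n\ge1$, let $X_n$ be the degree of asymmetry of a uniformly random composition of $n$. Then $X_n$ converges to a normal distribution (i.e. $(X_n-\mathbb{E}X_n)/\sqrt{\mathbb{V}X_n}$ converges in distribution to a standard normal), and $$\mathbb{E}X_n=\frac{n}{6}+O(1),\qquad \mathbb{V}X_n=\frac{5n}{108}+O(1).$$
   Context: A composition of $n$ is a sequence $(a_1,\dots,a_m)$ of positive integers summing to $n$. Its degree of asymmetry is $\mathrm{da}=|\{i: 1\le i\le m/2,\ a_i\neq a_{m+1-i}\}|$. *)

theory Defs
  imports "HOL-Probability.Probability" "HOL-Library.Landau_Symbols"
begin

definition compositions :: "nat \<Rightarrow> nat list set" where
  "compositions n = {xs. (\<forall>x\<in>set xs. 0 < x) \<and> sum_list xs = n}"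

text \<open>Degree of asymmetry: number of i with 1 \<le> i \<le> m/2 and a_i \<noteq> a_(m+1-i)
  (1-based indexing; list index i-1 and m-i).\<close>
definition da :: "nat list \<Rightarrow> nat" where
  "da xs = card {i. 1 \<le> i \<and> 2 * i \<le> length xs \<and> xs ! (i - 1) \<noteq> xs ! (length xs - i)}"

definition comp_pmf :: "nat \<Rightarrow> nat list pmf" where
  "comp_pmf n = pmf_of_set (compositions n)"

definition EX_da :: "nat \<Rightarrow> real" where
  "EX_da n = measure_pmf.expectation (comp_pmf n) (\<lambda>c. real (da c))"

definition VX_da :: "nat \<Rightarrow> real" where
  "VX_da n = measure_pmf.variance (comp_pmf n) (\<lambda>c. real (da c))"

end

theory Submission
  imports Defs
begin


lemma length_le_sum_list_pos:
  "\<forall>x\<in>set xs. 0 < (x::nat) \<Longrightarrow> length xs \<le> sum_list xs"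
  by (induction xs) auto

lemma finite_compositions: "finite (compositions n)"
proof -
  have "compositions n \<subseteq> {xs. set xs \<subseteq> {..n} \<and> length xs \<le> n}"
    unfolding compositions_def using length_le_sum_list_pos member_le_sum_list
    by fastforce
  moreover have "finite {xs. set xs \<subseteq> {..n} \<and> length xs \<le> n}"
    by (rule finite_lists_length_le) simp
  ultimately show ?thesis by (rule finite_subset)
qed

lemma da_Nil[simp]: "da [] = 0"
  unfolding da_def by auto

lemma da_single[simp]: "da [x] = 0"
proof -
  have "{i. 1 \<le> i \<and> 2 * i \<le> length [x] \<and> [x] ! (i - 1) \<noteq> [x] ! (length [x] - i)} = {}"
    by auto
  then show ?thesis unfolding da_def by (simp only: card.empty)
qed

lemma da_snoc_cons: "da (a # mid @ [b]) = (if a = b then 0 else 1) + da mid"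
proof -
  define D where "D = {j. 1 \<le> j \<and> 2 * j \<le> length mid \<and> mid ! (j - 1) \<noteq> mid ! (length mid - j)}"
  have eq: "{i. 1 \<le> i \<and> 2 * i \<le> length (a # mid @ [b]) \<and>
      (a # mid @ [b]) ! (i - 1) \<noteq> (a # mid @ [b]) ! (length (a # mid @ [b]) - i)}
     = (if a = b then {} else {1::nat}) \<union> Suc ` D"
  proof (intro set_eqI iffI)
    fix i assume i: "i \<in> {i. 1 \<le> i \<and> 2 * i \<le> length (a # mid @ [b]) \<and>
      (a # mid @ [b]) ! (i - 1) \<noteq> (a # mid @ [b]) ! (length (a # mid @ [b]) - i)}"
    show "i \<in> (if a = b then {} else {1::nat}) \<union> Suc ` D"
    proof (cases "i = 1")
      case True then show ?thesis using i by (auto simp: nth_append)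
    next
      case False
      then obtain j where j: "i = Suc j" "1 \<le> j" using i by (cases i) auto
      have "j \<in> D" using i j unfolding D_def
        by (auto simp: nth_append split: if_splits nat.splits)
      then show ?thesis using j by auto
    qed
  next
    fix i assume "i \<in> (if a = b then {} else {1::nat}) \<union> Suc ` D"
    then show "i \<in> {i. 1 \<le> i \<and> 2 * i \<le> length (a # mid @ [b]) \<and>
      (a # mid @ [b]) ! (i - 1) \<noteq> (a # mid @ [b]) ! (length (a # mid @ [b]) - i)}"
    proof
      assume "i \<in> (if a = b then {} else {1::nat})" then show ?thesis by (auto simp: nth_append split: if_splits)
    next
      assume "i \<in> Suc ` D"
      then obtain x where x: "i = Suc x" "1 \<le> x" "2 * x \<le> length mid"
        "mid ! (x - 1) \<noteq> mid ! (length mid - x)" unfolding D_def by auto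
      have "x - 1 < length mid" "length mid - x < length mid" using x by auto
      then show ?thesis using x by (auto simp: nth_append split: nat.splits)
    qed
  qed
  have fD: "finite D" unfolding D_def by (rule finite_subset[of _ "{..length mid}"]) auto
  have "card ((if a = b then {} else {1::nat}) \<union> Suc ` D) = card (if a = b then {} else {1::nat}) + card (Suc ` D)"
  proof (rule card_Un_disjoint)
    show "finite (if a = b then {} else {1::nat})" by simp
    show "finite (Suc ` D)" using fD by simp
    show "(if a = b then {} else {1::nat}) \<inter> Suc ` D = {}" by (auto simp: D_def)
  qed
  also have "\<dots> = (if a = b then 0 else 1) + card D"
    by (auto simp: card_image)
  finally show ?thesis unfolding da_def eq D_def by simp
qed

lemma compositions_small:
  "{c \<in> compositions n. length c < 2} = (if n = 0 then {[]} else {[n]})"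
proof (intro set_eqI iffI)
  fix c assume c: "c \<in> {c \<in> compositions n. length c < 2}"
  then have "c = [] \<or> (\<exists>x. c = [x])"
    by (cases c) auto
  then show "c \<in> (if n = 0 then {[]} else {[n]})"
    using c by (auto simp: compositions_def)
next
  fix c assume "c \<in> (if n = 0 then {[]} else {[n]})"
  then show "c \<in> {c \<in> compositions n. length c < 2}"
    by (auto simp: compositions_def split: if_splits)
qed

definition glue :: "nat \<times> nat \<times> nat list \<Rightarrow> nat list" where
  "glue = (\<lambda>(a, b, mid). a # mid @ [b])"

lemma compositions_big:
  "{c \<in> compositions n. 2 \<le> length c} =
     glue ` (SIGMA a:{1..n}. SIGMA b:{1..n-a}. compositions (n-a-b))"
proof (intro set_eqI iffI)
  fix c assume c: "c \<in> {c \<in> compositions n. 2 \<le> length c}"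
  then obtain a rest where r: "c = a # rest" "rest \<noteq> []" by (cases c) force+
  then obtain mid b where m: "rest = mid @ [b]" by (cases rest rule: rev_exhaust) auto
  have pos: "0 < a" "0 < b" "\<forall>x\<in>set mid. 0 < x" and s: "a + sum_list mid + b = n"
    using c r m by (auto simp: compositions_def)
  then have "(a, b, mid) \<in> (SIGMA a:{1..n}. SIGMA b:{1..n-a}. compositions (n-a-b))"
    by (auto simp: compositions_def)
  then show "c \<in> glue ` (SIGMA a:{1..n}. SIGMA b:{1..n-a}. compositions (n-a-b))"
    using r m by (auto simp: glue_def image_iff intro!: bexI[of _ "(a, b, mid)"])
next
  fix c assume "c \<in> glue ` (SIGMA a:{1..n}. SIGMA b:{1..n-a}. compositions (n-a-b))"
  then obtain a b mid where c: "c = a # mid @ [b]" "1 \<le> a" "a \<le> n" "1 \<le> b" "b \<le> n - a"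
    "mid \<in> compositions (n - a - b)" by (auto simp: glue_def)
  then show "c \<in> {c \<in> compositions n. 2 \<le> length c}"
    by (auto simp: compositions_def)
qed

lemma inj_glue: "inj glue"
  unfolding glue_def by (auto intro!: injI)

lemma sum_compositions:
  "(\<Sum>c\<in>compositions n. f c) = (if n = 0 then f [] else f [n]) +
     (\<Sum>a\<in>{1..n}. \<Sum>b\<in>{1..n-a}. \<Sum>mid\<in>compositions (n-a-b). f (a # mid @ [b]))"
proof -
  have split: "compositions n = {c \<in> compositions n. length c < 2} \<union> {c \<in> compositions n. 2 \<le> length c}"
    by auto
  have "(\<Sum>c\<in>compositions n. f c) = (\<Sum>c\<in>{c \<in> compositions n. length c < 2}. f c) +
        (\<Sum>c\<in>{c \<in> compositions n. 2 \<le> length c}. f c)"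
    by (subst split, rule sum.union_disjoint) (auto simp: finite_compositions)
  also have "(\<Sum>c\<in>{c \<in> compositions n. length c < 2}. f c) = (if n = 0 then f [] else f [n])"
    by (simp add: compositions_small)
  also have "(\<Sum>c\<in>{c \<in> compositions n. 2 \<le> length c}. f c) =
      (\<Sum>x\<in>(SIGMA a:{1..n}. SIGMA b:{1..n-a}. compositions (n-a-b)). f (glue x))"
    unfolding compositions_big
    by (rule sum.reindex[unfolded comp_def]) (rule inj_on_subset[OF inj_glue], simp)
  also have "\<dots> = (\<Sum>a\<in>{1..n}. \<Sum>x\<in>(SIGMA b:{1..n-a}. compositions (n-a-b)). f (glue (a, x)))"
    by (subst sum.Sigma) (auto simp: finite_compositions)
  also have "\<dots> = (\<Sum>a\<in>{1..n}. \<Sum>b\<in>{1..n-a}. \<Sum>mid\<in>compositions (n-a-b). f (a # mid @ [b]))"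
    by (intro sum.cong refl, subst sum.Sigma) (auto simp: finite_compositions glue_def split_def)
  finally show ?thesis .
qed

definition Phi :: "(nat \<Rightarrow> 'a::comm_ring_1) \<Rightarrow> nat \<Rightarrow> 'a" where
  "Phi g n = (\<Sum>c\<in>compositions n. g (da c))"

definition Wt :: "(nat \<Rightarrow> 'a::comm_ring_1) \<Rightarrow> nat \<Rightarrow> nat \<Rightarrow> nat \<Rightarrow> 'a" where
  "Wt g a b k = Phi (\<lambda>j. g ((if a = b then 0 else 1) + j)) k"

definition Pset :: "nat \<Rightarrow> (nat \<times> nat) set" where
  "Pset m = {(a, b). 1 \<le> a \<and> 1 \<le> b \<and> a + b \<le> m}"

definition Ag :: "(nat \<Rightarrow> 'a::comm_ring_1) \<Rightarrow> nat \<Rightarrow> 'a" where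
  "Ag g m = (\<Sum>(a, b)\<in>Pset m. Wt g a b (m - a - b))"

lemma finite_Pset: "finite (Pset m)"
  by (rule finite_subset[of _ "{..m} \<times> {..m}"]) (auto simp: Pset_def)

lemma Phi_Ag: "Phi g m = g 0 + Ag g m"
proof -
  have "Phi g m = g 0 + (\<Sum>a\<in>{1..m}. \<Sum>b\<in>{1..m-a}. Wt g a b (m - a - b))"
    unfolding Phi_def Wt_def by (subst sum_compositions) (simp add: da_snoc_cons)
  also have "(\<Sum>a\<in>{1..m}. \<Sum>b\<in>{1..m-a}. Wt g a b (m - a - b)) = Ag g m"
    unfolding Ag_def
    by (subst sum.Sigma) (auto simp: Pset_def intro!: sum.cong)
  finally show ?thesis .
qed

lemma Ag_rec:
  "Ag g (n + 2) = Ag g n + Phi g n + 2 * (\<Sum>k<n. Phi (\<lambda>j. g (Suc j)) k)"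
proof -
  define S1 where "S1 = {(1::nat, 1::nat)}"
  define S2 where "S2 = (\<lambda>k. (1::nat, n + 1 - k)) ` {..<n}"
  define S3 where "S3 = (\<lambda>k. (n + 1 - k, 1::nat)) ` {..<n}"
  define S4 where "S4 = (\<lambda>(a, b). (a + 1, b + 1)) ` Pset n"
  have P: "Pset (n + 2) = S1 \<union> S2 \<union> S3 \<union> S4"
  proof (intro set_eqI iffI)
    fix x assume x: "x \<in> Pset (n + 2)"
    obtain a b where ab: "x = (a, b)" by force
    show "x \<in> S1 \<union> S2 \<union> S3 \<union> S4"
    proof (cases "a = 1 \<or> b = 1")
      case True
      have ab2: "1 \<le> a" "1 \<le> b" "a + b \<le> n + 2" using x ab by (auto simp: Pset_def)
      consider "a = 1" "b = 1" | "a = 1" "b \<noteq> 1" | "a \<noteq> 1" "b = 1" using True by blast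
      then show ?thesis
      proof cases
        case 1 then show ?thesis using ab by (simp add: S1_def)
      next
        case 2
        have "x = (\<lambda>k. (1::nat, n + 1 - k)) (n + 1 - b)" "n + 1 - b \<in> {..<n}"
          using 2 ab ab2 by auto
        then have "x \<in> S2" unfolding S2_def by blast
        then show ?thesis by blast
      next
        case 3
        have "x = (\<lambda>k. (n + 1 - k, 1::nat)) (n + 1 - a)" "n + 1 - a \<in> {..<n}"
          using 3 ab ab2 by auto
        then have "x \<in> S3" unfolding S3_def by blast
        then show ?thesis by blast
      qed
    next
      case False
      then have "(a - 1, b - 1) \<in> Pset n" using x ab by (auto simp: Pset_def)
      moreover have "x = (\<lambda>(a, b). (a + 1, b + 1)) (a - 1, b - 1)" using False x ab
        by (auto simp: Pset_def)
      ultimately show ?thesis unfolding S4_def by blast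
    qed
  next
    fix x assume "x \<in> S1 \<union> S2 \<union> S3 \<union> S4"
    then show "x \<in> Pset (n + 2)"
      unfolding S1_def S2_def S3_def S4_def Pset_def by auto
  qed
  have fin: "finite S1" "finite S2" "finite S3" "finite S4"
    unfolding S1_def S2_def S3_def S4_def by (auto simp: finite_Pset)
  let ?F = "\<lambda>(a, b). Wt g a b (n + 2 - a - b)"
  have d1: "S1 \<inter> (S2 \<union> (S3 \<union> S4)) = {}"
    unfolding S1_def S2_def S3_def S4_def Pset_def by auto
  have d2: "S2 \<inter> (S3 \<union> S4) = {}"
    unfolding S2_def S3_def S4_def Pset_def by auto
  have d3: "S3 \<inter> S4 = {}"
    unfolding S3_def S4_def Pset_def by auto
  have P': "Pset (n + 2) = S1 \<union> (S2 \<union> (S3 \<union> S4))" using P by auto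
  have "Ag g (n + 2) = sum ?F S1 + (sum ?F S2 + (sum ?F S3 + sum ?F S4))"
    unfolding Ag_def P'
    using fin d1 d2 d3 by (simp add: sum.union_disjoint)
  also have "sum ?F S1 = Phi g n" by (simp add: S1_def Wt_def)
  also have "sum ?F S2 = (\<Sum>k<n. Phi (\<lambda>j. g (Suc j)) k)"
    unfolding S2_def by (subst sum.reindex) (auto intro!: inj_onI sum.cong simp: Wt_def)
  also have "sum ?F S3 = (\<Sum>k<n. Phi (\<lambda>j. g (Suc j)) k)"
    unfolding S3_def by (subst sum.reindex) (auto intro!: inj_onI sum.cong simp: Wt_def)
  also have "sum ?F S4 = Ag g n"
    unfolding S4_def Ag_def
    by (subst sum.reindex) (auto intro!: inj_onI sum.cong simp: Wt_def Pset_def)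
  finally show ?thesis unfolding mult_2 by (simp only: add_ac)
qed


lemma Phi_rec:
  "Phi g (n + 3) = Phi g (n + 2) + 2 * Phi g (n + 1) - 2 * Phi g n + 2 * Phi (\<lambda>j. g (Suc j)) n"
proof -
  define T where "T = (\<Sum>k<n. Phi (\<lambda>j. g (Suc j)) k)"
  have a1: "Ag g (n + 3) = Ag g (n + 1) + Phi g (n + 1) + 2 * (T + Phi (\<lambda>j. g (Suc j)) n)"
    using Ag_rec[of g "n + 1"] unfolding T_def by (simp add: numeral_3_eq_3)
  have a2: "Ag g (n + 2) = Ag g n + Phi g n + 2 * T"
    unfolding T_def by (rule Ag_rec)
  have p3: "Phi g (n+3) = g 0 + Ag g (n+3)" and p2: "Phi g (n+2) = g 0 + Ag g (n+2)"
    and p1: "Phi g (n+1) = g 0 + Ag g (n+1)" and p0: "Phi g n = g 0 + Ag g n"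
    by (rule Phi_Ag)+
  show ?thesis unfolding p3 a1 p2 a2 p1 p0 by (simp add: algebra_simps)
qed


lemma Pset_01: "Pset 0 = {}" "Pset (Suc 0) = {}"
  by (auto simp: Pset_def)

lemma Phi_0: "Phi g 0 = g 0"
  using Phi_Ag[of g 0] by (simp add: Ag_def Pset_01)

lemma Phi_1: "Phi g 1 = g 0"
  using Phi_Ag[of g 1] by (simp add: Ag_def Pset_01)


lemma Pset_2: "Pset 2 = {(1, 1)}"
proof (intro set_eqI iffI)
  fix x assume "x \<in> Pset 2"
  then obtain a b where "x = (a, b)" "1 \<le> a" "1 \<le> b" "a + b \<le> 2" by (auto simp: Pset_def)
  then show "x \<in> {(1, 1)}" by simp
qed (auto simp: Pset_def)

lemma Phi_2: "Phi g 2 = 2 * g 0"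
proof -
  have "Ag g 2 = Phi g 0" by (simp add: Ag_def Pset_2 Wt_def)
  then have "Phi g 2 = g 0 + g 0" using Phi_Ag[of g 2] Phi_0[of g] by simp
  then show ?thesis by (simp only: mult_2)
qed



lemma nat3_induct:
  fixes n :: nat
  assumes "P 0" "P 1" "P 2" "\<And>n. P n \<Longrightarrow> P (n + 1) \<Longrightarrow> P (n + 2) \<Longrightarrow> P (n + 3)"
  shows "P n"
proof (induction n rule: less_induct)
  case (less n)
  show ?case
  proof (cases "n < 3")
    case True
    then have "n = 0 \<or> n = 1 \<or> n = 2" by auto
    then show ?thesis using assms by auto
  next
    case False
    then obtain m where m: "n = m + 3" by (metis add.commute le_Suc_ex not_less)
    have "P m" "P (m + 1)" "P (m + 2)" using less m by auto
    then show ?thesis using assms(4) m by blast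
  qed
qed

lemma Phi_small_Suc: "Phi g (Suc 0) = g 0" "Phi g (Suc (Suc 0)) = 2 * g 0"
  using Phi_1[of g] Phi_2[of g] by (simp_all add: numeral_2_eq_2)

lemma Phi_sum: "Phi (\<lambda>j. f j + h j) n = Phi f n + Phi h n"
  unfolding Phi_def by (simp add: sum.distrib)

lemma Phi_scale: "Phi (\<lambda>j. c * f j) n = c * Phi f n"
  unfolding Phi_def by (simp add: sum_distrib_left)

definition Cn :: "nat \<Rightarrow> real" where "Cn n = Phi (\<lambda>_. 1) n"
definition Sn :: "nat \<Rightarrow> real" where "Sn n = Phi (\<lambda>j. real j) n"
definition Qn :: "nat \<Rightarrow> real" where "Qn n = Phi (\<lambda>j. (real j)^2) n"

lemma Cn_card: "Cn n = real (card (compositions n))"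
  unfolding Cn_def Phi_def by simp

lemma Cn_rec: "Cn (n + 3) = Cn (n + 2) + 2 * Cn (n + 1)"
  using Phi_rec[of "\<lambda>_. (1::real)" n] unfolding Cn_def by simp

lemma Cn_small: "Cn 0 = 1" "Cn 1 = 1" "Cn 2 = 2" "Cn (Suc 0) = 1" "Cn (Suc (Suc 0)) = 2"
  unfolding Cn_def by (simp_all add: Phi_0 Phi_1 Phi_2 Phi_small_Suc)

lemma Cn_closed: "Cn (n + 1) = 2 ^ n"
proof (induction n rule: nat3_induct)
  case 1 then show ?case using Phi_1[of "\<lambda>_. 1::real"] by (simp add: Cn_def)
next
  case 2 then show ?case using Phi_small_Suc[of "\<lambda>_. 1::real"] by (simp add: Cn_def)
next
  case 3
  show ?case using Cn_rec[of 0] by (simp add: Cn_small eval_nat_numeral)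
next
  case (4 n)
  have "Cn (n + 4) = Cn (n + 3) + 2 * Cn (n + 2)" using Cn_rec[of "n + 1"] by (simp add: eval_nat_numeral)
  then show ?case using 4 by (simp add: eval_nat_numeral)
qed

lemma Cn_pos: "Cn n > 0"
  using Cn_closed[of "n - 1"] by (cases n) (auto simp: Cn_def Phi_0)

lemma Sn_rec: "Sn (n + 3) = Sn (n + 2) + 2 * Sn (n + 1) + 2 * Cn n"
proof -
  have "Phi (\<lambda>j. real (Suc j)) n = Sn n + Cn n"
    using Phi_sum[of "\<lambda>j. real j" "\<lambda>_. 1" n] unfolding Sn_def Cn_def by (simp add: add.commute)
  then show ?thesis using Phi_rec[of "\<lambda>j. real j" n] unfolding Sn_def by simp
qed

lemma Qn_rec: "Qn (n + 3) = Qn (n + 2) + 2 * Qn (n + 1) + 4 * Sn n + 2 * Cn n"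
proof -
  have "Phi (\<lambda>j. (real (Suc j))^2) n = Phi (\<lambda>j. (real j)^2 + (2 * real j + 1)) n"
    by (simp add: power2_eq_square algebra_simps)
  also have "\<dots> = Qn n + 2 * Sn n + Cn n"
    unfolding Qn_def Sn_def Cn_def Phi_sum Phi_scale by simp
  finally have "Phi (\<lambda>j. (real (Suc j))^2) n = Qn n + 2 * Sn n + Cn n" .
  then show ?thesis using Phi_rec[of "\<lambda>j. (real j)^2" n] unfolding Qn_def by simp
qed

lemma Sn_small: "Sn 0 = 0" "Sn 1 = 0" "Sn 2 = 0" "Sn (Suc 0) = 0" "Sn (Suc (Suc 0)) = 0"
  unfolding Sn_def by (simp_all add: Phi_0 Phi_1 Phi_2 Phi_small_Suc)

lemma Qn_small: "Qn 0 = 0" "Qn 1 = 0" "Qn 2 = 0" "Qn (Suc 0) = 0" "Qn (Suc (Suc 0)) = 0"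
  unfolding Qn_def by (simp_all add: Phi_0 Phi_1 Phi_2 Phi_small_Suc)

lemma Sn_closed: "Sn (n + 2) = (real (n + 2) / 12 - 1 / 18) * 2 ^ (n + 2) - 4 / 9 * (-1) ^ (n + 2)"
proof (induction n rule: nat3_induct)
  case 1 then show ?case by (simp add: Sn_small)
next
  case 2
  show ?case using Sn_rec[of 0] by (simp add: Sn_small Cn_small eval_nat_numeral)
next
  case 3
  show ?case using Sn_rec[of 0] Sn_rec[of 1] by (simp add: Sn_small Cn_small eval_nat_numeral)
next
  case (4 n)
  have "Sn (n + 5) = Sn (n + 4) + 2 * Sn (n + 3) + 2 * Cn (n + 2)"
    using Sn_rec[of "n + 2"] by (simp add: eval_nat_numeral)
  also have "Cn (n + 2) = 2 ^ (n + 1)" using Cn_closed[of "n + 1"] by (simp add: eval_nat_numeral)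
  finally show ?case using 4 by (simp add: eval_nat_numeral field_simps)
qed


lemma Qn_closed: "Qn (n + 3) = (real (n + 3)^2 / 72 + real (n + 3) / 216 + 1 / 54) * 2 ^ (n + 3)
    + (16 * real (n + 3) / 27 - 68 / 27) * (-1) ^ (n + 3)"
proof (induction n rule: nat3_induct)
  case 1
  show ?case using Qn_rec[of 0] by (simp add: Sn_small Qn_small Cn_small eval_nat_numeral)
next
  case 2
  show ?case using Qn_rec[of 0] Qn_rec[of 1] by (simp add: Sn_small Qn_small Cn_small eval_nat_numeral)
next
  case 3
  have s3: "Sn 3 = 2" using Sn_closed[of 1] by (simp add: eval_nat_numeral)
  show ?case using Qn_rec[of 0] Qn_rec[of 1] Qn_rec[of 2] s3
    by (simp add: Sn_small Qn_small Cn_small eval_nat_numeral)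
next
  case (4 n)
  have "Qn (n + 6) = Qn (n + 5) + 2 * Qn (n + 4) + 4 * Sn (n + 3) + 2 * Cn (n + 3)"
    using Qn_rec[of "n + 3"] by (simp add: eval_nat_numeral)
  also have "Cn (n + 3) = 2 ^ (n + 2)" using Cn_closed[of "n + 2"] by (simp add: eval_nat_numeral)
  also have "Sn (n + 3) = (real (n + 3) / 12 - 1 / 18) * 2 ^ (n + 3) - 4 / 9 * (-1) ^ (n + 3)"
    using Sn_closed[of "n + 1"] by (simp add: eval_nat_numeral)
  finally show ?case using 4 by (simp add: eval_nat_numeral field_simps power2_eq_square)
qed


lemma compositions_ne: "compositions n \<noteq> {}"
proof (cases n)
  case 0 then have "[] \<in> compositions n" by (simp add: compositions_def)
  then show ?thesis by auto
next
  case (Suc m) then have "[n] \<in> compositions n" by (simp add: compositions_def)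
  then show ?thesis by auto
qed

lemma EX_da_eq: "EX_da n = Sn n / Cn n"
  unfolding EX_da_def comp_pmf_def
  by (subst integral_pmf_of_set[OF compositions_ne finite_compositions])
     (simp add: Sn_def Cn_card Phi_def)

lemma VX_da_eq: "VX_da n = Qn n / Cn n - (Sn n / Cn n)^2"
proof -
  define E where "E = Sn n / Cn n"
  have C: "Cn n > 0" by (rule Cn_pos)
  have "VX_da n = (\<Sum>c\<in>compositions n. (real (da c) - E)^2) / Cn n"
    unfolding VX_da_def EX_da_eq[symmetric] E_def EX_da_def comp_pmf_def
    by (subst integral_pmf_of_set[OF compositions_ne finite_compositions]) (simp add: Cn_card)
  also have "(\<Sum>c\<in>compositions n. (real (da c) - E)^2)
      = (\<Sum>c\<in>compositions n. (real (da c))^2) - 2 * E * (\<Sum>c\<in>compositions n. real (da c))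
        + E^2 * (\<Sum>c\<in>compositions n. 1)"
    by (simp add: power2_eq_square algebra_simps sum.distrib sum_subtractf sum_distrib_left)
  also have "\<dots> = Qn n - 2 * E * Sn n + E^2 * Cn n"
    by (simp add: Qn_def Sn_def Cn_def Phi_def)
  finally show ?thesis using C unfolding E_def by (simp add: field_simps power2_eq_square)
qed

lemma EX_closed:
  "EX_da (m + 3) = real (m + 3) / 6 - 1 / 9 - 8 / 9 * ((-1) ^ (m + 3) / 2 ^ (m + 3))"
proof -
  have S: "Sn (m + 3) = (real (m + 3) / 12 - 1 / 18) * 2 ^ (m + 3) - 4 / 9 * (-1) ^ (m + 3)"
    using Sn_closed[of "m + 1"] by (simp add: eval_nat_numeral)
  have C: "Cn (m + 3) = 2 ^ (m + 3) / 2"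
    using Cn_closed[of "m + 2"] by (simp add: eval_nat_numeral)
  show ?thesis unfolding EX_da_eq S C by (simp add: field_simps)
qed

lemma VX_closed:
  fixes m :: nat
  defines "x \<equiv> (-1) ^ (m + 3) / 2 ^ (m + 3) :: real"
  shows "VX_da (m + 3) = 5 * real (m + 3) / 108 + 2 / 81 + 40 / 27 * (real (m + 3) * x)
     - 424 / 81 * x - 64 / 81 * x^2"
proof -
  have S: "Sn (m + 3) = (real (m + 3) / 12 - 1 / 18) * 2 ^ (m + 3) - 4 / 9 * (-1) ^ (m + 3)"
    using Sn_closed[of "m + 1"] by (simp add: eval_nat_numeral)
  have C: "Cn (m + 3) = 2 ^ (m + 3) / 2"
    using Cn_closed[of "m + 2"] by (simp add: eval_nat_numeral)
  have Q: "Qn (m + 3) = (real (m + 3)^2 / 72 + real (m + 3) / 216 + 1 / 54) * 2 ^ (m + 3)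
    + (16 * real (m + 3) / 27 - 68 / 27) * (-1) ^ (m + 3)" by (rule Qn_closed)
  have sq: "((-1::real) ^ (m + 3))^2 = 1" by (simp add: power_even_eq[symmetric] power_mult[symmetric])
  show ?thesis unfolding VX_da_eq S C Q x_def
    using sq by (simp add: field_simps power2_eq_square)
qed


lemma x_bounds:
  fixes N :: nat
  shows "\<bar>(-1) ^ N / 2 ^ N :: real\<bar> \<le> 1" "\<bar>real N * ((-1) ^ N / 2 ^ N) :: real\<bar> \<le> 1"
proof -
  have a: "\<bar>(-1) ^ N / 2 ^ N :: real\<bar> = 1 / 2 ^ N" by (simp add: abs_mult power_abs)
  have "(1::real) \<le> 2 ^ N" by simp
  then show "\<bar>(-1) ^ N / 2 ^ N :: real\<bar> \<le> 1" unfolding a by simp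
  have "real N \<le> 2 ^ N" using less_exp[of N] by (metis less_imp_le of_nat_le_iff of_nat_numeral of_nat_power)
  then show "\<bar>real N * ((-1) ^ N / 2 ^ N) :: real\<bar> \<le> 1" unfolding abs_mult a by simp
qed

lemma EX_bound: assumes "n \<ge> 3" shows "\<bar>EX_da n - real n / 6\<bar> \<le> 1"
proof -
  obtain m where m: "n = m + 3" using assms by (metis add.commute le_Suc_ex)
  define x where "x = ((-1) ^ (m + 3) / 2 ^ (m + 3) :: real)"
  have b1: "\<bar>x\<bar> \<le> 1" using x_bounds[of "m + 3"] unfolding x_def by auto
  have eq: "EX_da n - real n / 6 = - 1 / 9 - 8 / 9 * x" unfolding m EX_closed x_def by simp
  show ?thesis unfolding eq using b1 by (auto simp: abs_le_iff)
qed

lemma VX_bound: assumes "n \<ge> 3" shows "\<bar>VX_da n - 5 * real n / 108\<bar> \<le> 8"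
proof -
  obtain m where m: "n = m + 3" using assms by (metis add.commute le_Suc_ex)
  define x where "x = ((-1) ^ (m + 3) / 2 ^ (m + 3) :: real)"
  have b1: "\<bar>x\<bar> \<le> 1" and b2: "\<bar>real (m + 3) * x\<bar> \<le> 1" using x_bounds[of "m + 3"] unfolding x_def by auto
  have "\<bar>x\<bar>^2 \<le> 1" using b1 by (intro power_le_one) auto
  then have b3: "x^2 \<le> 1" by simp
  have b4: "0 \<le> x^2" by simp
  have "VX_da n - 5 * real n / 108 = 2 / 81 + 40 / 27 * (real (m + 3) * x) - 424 / 81 * x - 64 / 81 * x^2"
    unfolding m VX_closed x_def by simp
  moreover have "\<bar>2 / 81 + 40 / 27 * y - 424 / 81 * x - 64 / 81 * z\<bar> \<le> 8"
    if "\<bar>x\<bar> \<le> 1" "\<bar>y\<bar> \<le> 1" "0 \<le> z" "z \<le> 1" for x y z :: real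
    using that by (auto simp: abs_le_iff)
  ultimately show ?thesis using b1 b2 b3 b4 by presburger
qed



lemma exp_taylor_gen:
  fixes z :: complex
  assumes "norm z \<le> 1"
  shows "norm (exp z - (\<Sum>i\<le>n. z ^ i / fact i)) \<le> 3 * norm z ^ Suc n / fact n"
proof -
  have a: "norm (exp z - (\<Sum>i\<le>n. z ^ i / fact i)) \<le> exp (norm z) * (norm z ^ Suc n) / fact n"
    by (rule Taylor_exp_field)
  have "exp (norm z) \<le> 3"
    using exp_le exp_mono[OF assms] by linarith
  then have "exp (norm z) * (norm z ^ Suc n) \<le> 3 * (norm z ^ Suc n)"
    by (intro mult_right_mono) auto
  then have "exp (norm z) * (norm z ^ Suc n) / fact n \<le> 3 * (norm z ^ Suc n) / fact n"
    by (intro divide_right_mono) auto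
  then show ?thesis using a by linarith
qed

lemma exp_taylor3:
  fixes z :: complex
  assumes "norm z \<le> 1"
  shows "norm (exp z - 1 - z - z^2 / 2) \<le> 2 * norm z ^ 3"
proof -
  have "(\<Sum>i\<le>2. z ^ i / fact i) = 1 + z + z^2 / 2"
    by (simp add: eval_nat_numeral)
  then have "norm (exp z - 1 - z - z^2 / 2) \<le> 3 * norm z ^ 3 / 2"
    using exp_taylor_gen[OF assms, of 2] by (simp add: eval_nat_numeral diff_diff_eq)
  moreover have "0 \<le> norm z ^ 3" by simp
  ultimately show ?thesis by linarith
qed

lemma exp_taylor1:
  fixes z :: complex
  assumes "norm z \<le> 1"
  shows "norm (exp z - 1) \<le> 3 * norm z"
  using exp_taylor_gen[OF assms, of 0] by simp

definition lam :: "real \<Rightarrow> complex" where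
  "lam \<theta> = exp (\<i> * of_real \<theta> / 6 - 5 * of_real \<theta>^2 / 216)"

definition Gerr :: "real \<Rightarrow> complex" where
  "Gerr \<theta> = lam \<theta> ^ 3 - lam \<theta> ^ 2 / 2 - lam \<theta> / 2 + (1 - exp (\<i> * of_real \<theta>)) / 4"

lemma norm5:
  fixes a b c d e :: "'a::real_normed_vector"
  shows "norm (a - b - c - d + e) \<le> norm a + norm b + norm c + norm d + norm e"
proof -
  have "norm (a - b - c - d + e) \<le> norm (a - b - c - d) + norm e" by (rule norm_triangle_ineq)
  moreover have "norm (a - b - c - d) \<le> norm (a - b - c) + norm d" by (rule norm_triangle_ineq4)
  moreover have "norm (a - b - c) \<le> norm (a - b) + norm c" by (rule norm_triangle_ineq4)
  moreover have "norm (a - b) \<le> norm a + norm b" by (rule norm_triangle_ineq4)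
  ultimately show ?thesis by linarith
qed

lemma norm_w:
  assumes "\<bar>\<theta>\<bar> \<le> 1"
  shows "norm (\<i> * of_real \<theta> / 6 - 5 * of_real \<theta>^2 / 216 :: complex) \<le> \<bar>\<theta>\<bar> / 5"
proof -
  have "norm (\<i> * of_real \<theta> / 6 - 5 * of_real \<theta>^2 / 216 :: complex)
     \<le> norm (\<i> * of_real \<theta> / 6 :: complex) + norm (5 * of_real \<theta>^2 / 216 :: complex)"
    by (rule norm_triangle_ineq4)
  also have "\<dots> = \<bar>\<theta>\<bar> / 6 + 5 * \<theta>^2 / 216"
    by (simp add: norm_mult norm_divide norm_power)
  also have "\<theta>^2 \<le> \<bar>\<theta>\<bar>" using assms by (simp add: power2_eq_square abs_mult[symmetric])
    (metis abs_ge_zero abs_mult_self_eq mult_left_le_one_le)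
  then have "\<bar>\<theta>\<bar> / 6 + 5 * \<theta>^2 / 216 \<le> \<bar>\<theta>\<bar> / 5" by linarith
  finally show ?thesis .
qed

lemma lam_norm: "norm (lam \<theta>) \<le> 1"
  unfolding lam_def by (simp add: power2_eq_square)

lemma lam_minus_1:
  assumes "\<bar>\<theta>\<bar> \<le> 1"
  shows "norm (lam \<theta> - 1) \<le> \<bar>\<theta>\<bar>"
proof -
  let ?w = "\<i> * of_real \<theta> / 6 - 5 * of_real \<theta>^2 / 216 :: complex"
  have w: "norm ?w \<le> \<bar>\<theta>\<bar> / 5" by (rule norm_w[OF assms])
  then have "norm ?w \<le> 1" using assms by linarith
  then have "norm (exp ?w - 1) \<le> 3 * norm ?w" by (rule exp_taylor1)
  then show ?thesis unfolding lam_def using w by linarith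
qed

lemma Gerr_bound:
  assumes "\<bar>\<theta>\<bar> \<le> 1"
  shows "norm (Gerr \<theta>) \<le> 2 * \<bar>\<theta>\<bar> ^ 3"
proof -
  define t where "t = (of_real \<theta> :: complex)"
  define w where "w = \<i> * t / 6 - 5 * t^2 / 216"
  define E where "E = (\<lambda>z::complex. exp z - 1 - z - z^2 / 2)"
  have nt: "norm t = \<bar>\<theta>\<bar>" unfolding t_def by simp
  have nw: "norm w \<le> \<bar>\<theta>\<bar> / 5" unfolding w_def t_def by (rule norm_w[OF assms])
  have l: "lam \<theta> ^ k = exp (of_nat k * w)" for k
    unfolding lam_def w_def t_def exp_of_nat_mult by simp
  have id: "Gerr \<theta> = E (3 * w) - E (2 * w) / 2 - E w / 2 - E (\<i> * t) / 4
      + (- 65 * \<i> * t^3 / 2592 + 325 * t^4 / 186624)"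
  proof -
    have G: "Gerr \<theta> = exp (3 * w) - exp (2 * w) / 2 - exp w / 2 + (1 - exp (\<i> * t)) / 4"
      unfolding Gerr_def using l[of 3] l[of 2] l[of 1] by (simp add: t_def lam_def w_def)
    show ?thesis unfolding G E_def w_def
      by (simp add: field_simps power2_eq_square eval_nat_numeral)
  qed
  have gen: "norm (E z) \<le> 2 * r ^ 3" if "norm z \<le> r" "r \<le> 1" for z r
  proof -
    have "norm (E z) \<le> 2 * norm z ^ 3" unfolding E_def using that by (intro exp_taylor3) auto
    also have "\<dots> \<le> 2 * r ^ 3" using that by (intro mult_left_mono power_mono) auto
    finally show ?thesis .
  qed
  have b1: "norm (E (3 * w)) \<le> 2 * (3 * (\<bar>\<theta>\<bar> / 5)) ^ 3"
    using nw assms by (intro gen) (auto simp: norm_mult)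
  have b2: "norm (E (2 * w)) \<le> 2 * (2 * (\<bar>\<theta>\<bar> / 5)) ^ 3"
    using nw assms by (intro gen) (auto simp: norm_mult)
  have b3: "norm (E w) \<le> 2 * (\<bar>\<theta>\<bar> / 5) ^ 3"
    using nw assms by (intro gen) auto
  have b4: "norm (E (\<i> * t)) \<le> 2 * \<bar>\<theta>\<bar> ^ 3"
    unfolding E_def using exp_taylor3[of "\<i> * t"] nt assms by (simp add: norm_mult)
  have b5: "norm (- 65 * \<i> * t^3 / 2592 + 325 * t^4 / 186624) \<le> 65 / 2592 * \<bar>\<theta>\<bar>^3 + 325 / 186624 * \<bar>\<theta>\<bar>^4"
    using norm_triangle_ineq[of "- 65 * \<i> * t^3 / 2592" "325 * t^4 / 186624"] nt
    by (simp add: norm_mult norm_divide norm_power)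
  have b6: "\<bar>\<theta>\<bar>^4 \<le> \<bar>\<theta>\<bar>^3" using assms
    by (intro power_decreasing) auto
  have "norm (Gerr \<theta>) \<le> norm (E (3 * w)) + norm (E (2 * w)) / 2 + norm (E w) / 2 + norm (E (\<i> * t)) / 4
      + norm (- 65 * \<i> * t^3 / 2592 + 325 * t^4 / 186624)"
    unfolding id using norm5[of "E (3 * w)" "E (2 * w) / 2" "E w / 2" "E (\<i> * t) / 4"
      "- 65 * \<i> * t^3 / 2592 + 325 * t^4 / 186624"] by (simp only: norm_divide) simp
  also have "\<dots> \<le> 2 * \<bar>\<theta>\<bar> ^ 3"
  proof -
    have e1: "(3 * (\<bar>\<theta>\<bar> / 5)) ^ 3 = 27 / 125 * \<bar>\<theta>\<bar> ^ 3"
      and e2: "(2 * (\<bar>\<theta>\<bar> / 5)) ^ 3 = 8 / 125 * \<bar>\<theta>\<bar> ^ 3"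
      and e3: "(\<bar>\<theta>\<bar> / 5) ^ 3 = 1 / 125 * \<bar>\<theta>\<bar> ^ 3"
      by (simp_all add: power_mult_distrib power_divide)
    have "0 \<le> \<bar>\<theta>\<bar> ^ 3" by simp
    then show ?thesis using b1 b2 b3 b4 b5 b6 unfolding e1 e2 e3 by linarith
  qed
  finally show ?thesis .
qed


lemma decay:
  fixes r :: "nat \<Rightarrow> real"
  assumes nn: "\<And>k. 0 \<le> r k"
    and rec: "\<And>k. r (k + 2) \<le> a * r (k + 1) + b * r k + R"
    and ab: "0 \<le> a" "0 \<le> b" "a + b \<le> 9 / 16" and R: "0 \<le> R"
  shows "r k \<le> (r 0 + 2 * r 1) * (3 / 4) ^ k + 3 * R"
proof (induction k rule: less_induct)
  case (less k)
  define K where "K = r 0 + 2 * r 1"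
  have K0: "0 \<le> K" unfolding K_def using nn[of 0] nn[of 1] by simp
  show ?case
  proof (cases "k < 2")
    case True
    then consider "k = 0" | "k = 1" by linarith
    then show ?thesis
    proof cases
      case 1 then show ?thesis using nn[of 0] nn[of 1] R by (simp add: K_def)
    next
      case 2
      have "r 1 \<le> (r 0 + 2 * r 1) * (3 / 4)" using nn[of 0] nn[of 1] by simp
      then show ?thesis using R unfolding 2 power_one_right by linarith
    qed
  next
    case False
    then obtain j where j: "k = j + 2" by (metis add.commute le_Suc_ex not_less)
    have IH1: "r (j + 1) \<le> K * (3 / 4) ^ (j + 1) + 3 * R" unfolding K_def
      by (rule less.IH) (simp add: j)
    have IH0: "r j \<le> K * (3 / 4) ^ j + 3 * R" unfolding K_def
      by (rule less.IH) (simp add: j)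
    define X where "X = K * (3 / 4) ^ j"
    have X0: "0 \<le> X" unfolding X_def using K0 by simp
    have "r k \<le> a * r (j + 1) + b * r j + R" using rec[of j] j by simp
    also have "\<dots> \<le> a * (X * (3 / 4) + 3 * R) + b * (X + 3 * R) + R"
      using IH1 IH0 ab unfolding X_def
      by (intro add_mono mult_left_mono) (auto simp: field_simps)
    also have "\<dots> = X * (a * (3 / 4) + b) + 3 * R * (a + b) + R" by (simp add: algebra_simps)
    also have "\<dots> \<le> X * (9 / 16) + 3 * R * (9 / 16) + R"
      using X0 R ab by (intro add_mono mult_left_mono) auto
    also have "\<dots> \<le> K * (3 / 4) ^ k + 3 * R" unfolding X_def j using R
      by (simp add: power_add field_simps)
    finally show ?thesis unfolding K_def .
  qed
qed

lemma decay_sum: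
  fixes r :: "nat \<Rightarrow> real"
  assumes "\<And>k. r k \<le> K * (3 / 4) ^ k + 3 * R" "0 \<le> K"
  shows "(\<Sum>k<n. r k) \<le> 4 * K + 3 * real n * R"
proof -
  have "(\<Sum>k<n. r k) \<le> (\<Sum>k<n. K * (3 / 4) ^ k + 3 * R)" by (intro sum_mono assms)
  also have "\<dots> = K * (\<Sum>k<n. (3 / 4) ^ k) + 3 * real n * R"
    by (simp add: sum.distrib sum_distrib_left)
  also have "(\<Sum>k<n. (3 / 4 :: real) ^ k) = (1 - (3 / 4) ^ n) / (1 - 3 / 4)"
    by (subst sum_gp_strict) simp
  also have "\<dots> \<le> 4" by simp
  finally show ?thesis using assms(2) by (smt (verit) mult_left_mono)
qed

lemma seq_main:
  fixes p :: "nat \<Rightarrow> complex" and lam eps G :: complex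
  assumes rec: "\<And>n. p (n + 3) = p (n + 2) / 2 + p (n + 1) / 2 - eps * p n / 4"
    and pb: "\<And>n. norm (p n) \<le> 1"
    and ln: "norm lam \<le> 1" and l1: "norm (lam - 1) \<le> 1 / 48"
    and G: "G = lam ^ 3 - lam ^ 2 / 2 - lam / 2 + eps / 4"
  shows "norm (p (n + 1) - lam ^ n * p 1)
    \<le> 4 * (norm (p 2 - lam * p 1) + 2 * norm (p 3 - lam * p 2)) + 3 * real n * norm G"
proof -
  define q where "q k = p (k + 2) - lam * p (k + 1)" for k
  define \<alpha> where "\<alpha> = lam - 1 / 2"
  define \<beta> where "\<beta> = (lam - 1) * (lam + 1 / 2)"
  have qrec: "q (k + 2) = - \<alpha> * q (k + 1) - \<beta> * q k - G * p (k + 1)" for k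
  proof -
    have e: "p (Suc (Suc (Suc (Suc k)))) = p (Suc (Suc (Suc k))) / 2 + p (Suc (Suc k)) / 2 - eps * p (Suc k) / 4"
      using rec[of "k + 1"] by (simp add: eval_nat_numeral)
    show ?thesis unfolding q_def \<alpha>_def \<beta>_def G
      by (simp add: eval_nat_numeral e) (simp add: field_simps power2_eq_square power3_eq_cube)
  qed
  define r where "r k = norm (q k)" for k
  have rrec: "r (k + 2) \<le> norm \<alpha> * r (k + 1) + norm \<beta> * r k + norm G" for k
  proof -
    have "r (k + 2) \<le> norm (- \<alpha> * q (k + 1)) + norm (\<beta> * q k) + norm (G * p (k + 1))"
      unfolding r_def qrec by (rule order_trans[OF norm_triangle_ineq4] order_trans[OF norm_triangle_ineq4] add_mono order_refl)+
    also have "\<dots> \<le> norm \<alpha> * r (k + 1) + norm \<beta> * r k + norm G * 1"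
      unfolding r_def norm_mult norm_minus_cancel
      by (intro add_mono mult_left_mono pb order_refl) auto
    finally show ?thesis by simp
  qed
  have na: "norm \<alpha> \<le> 1 / 2 + norm (lam - 1)"
  proof -
    have "\<alpha> = (lam - 1) + 1 / 2" unfolding \<alpha>_def by simp
    then show ?thesis using norm_triangle_ineq[of "lam - 1" "1 / 2 :: complex"] by simp
  qed
  have nb: "norm \<beta> \<le> 3 / 2 * norm (lam - 1)"
  proof -
    have "norm (lam + 1 / 2) \<le> norm lam + norm (1 / 2 :: complex)" by (rule norm_triangle_ineq)
    then have "norm (lam + 1 / 2) \<le> 3 / 2" using ln by simp
    then show ?thesis unfolding \<beta>_def norm_mult
      by (metis mult.commute mult_right_mono norm_ge_zero)
  qed
  have ab: "norm \<alpha> + norm \<beta> \<le> 9 / 16" using na nb l1 by linarith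
  have dec: "r k \<le> (r 0 + 2 * r 1) * (3 / 4) ^ k + 3 * norm G" for k
    by (rule decay[OF _ rrec _ _ ab]) (auto simp: r_def)
  have sumb: "(\<Sum>k<n. r k) \<le> 4 * (r 0 + 2 * r 1) + 3 * real n * norm G"
    by (rule decay_sum[OF dec]) (auto simp: r_def)
  have tel: "norm (p (m + 1) - lam ^ m * p 1) \<le> (\<Sum>k<m. r k)" for m
  proof (induction m)
    case 0 then show ?case by simp
  next
    case (Suc m)
    have "p (Suc m + 1) - lam ^ Suc m * p 1 = q m + lam * (p (m + 1) - lam ^ m * p 1)"
      unfolding q_def by (simp add: algebra_simps)
    then have "norm (p (Suc m + 1) - lam ^ Suc m * p 1) \<le> r m + norm lam * norm (p (m + 1) - lam ^ m * p 1)"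
      unfolding r_def by (metis norm_mult norm_triangle_ineq)
    also have "\<dots> \<le> r m + 1 * norm (p (m + 1) - lam ^ m * p 1)"
      using ln by (intro add_mono mult_right_mono) auto
    also have "\<dots> \<le> r m + (\<Sum>k<m. r k)" using Suc by simp
    finally show ?case by (simp add: add.commute)
  qed
  have "r 0 = norm (p 2 - lam * p 1)" "r 1 = norm (p 3 - lam * p 2)"
    unfolding r_def q_def by (simp_all add: eval_nat_numeral)
  then show ?thesis using tel[of n] sumb by simp
qed



definition uu :: "real \<Rightarrow> complex" where "uu \<theta> = exp (\<i> * of_real \<theta>)"

definition pp :: "real \<Rightarrow> nat \<Rightarrow> complex" where
  "pp \<theta> n = Phi (\<lambda>j. uu \<theta> ^ j) n / 2 ^ n"

lemma Phi_u_Suc: "Phi (\<lambda>j. uu \<theta> ^ Suc j) n = uu \<theta> * Phi (\<lambda>j. uu \<theta> ^ j) n"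
  using Phi_scale[of "uu \<theta>" "\<lambda>j. uu \<theta> ^ j" n] by simp

lemma pp_rec: "pp \<theta> (n + 3) = pp \<theta> (n + 2) / 2 + pp \<theta> (n + 1) / 2 - (1 - uu \<theta>) * pp \<theta> n / 4"
proof -
  have e: "Phi (\<lambda>j. uu \<theta> ^ j) (n + 3) = Phi (\<lambda>j. uu \<theta> ^ j) (n + 2) + 2 * Phi (\<lambda>j. uu \<theta> ^ j) (n + 1)
      - 2 * Phi (\<lambda>j. uu \<theta> ^ j) n + 2 * (uu \<theta> * Phi (\<lambda>j. uu \<theta> ^ j) n)"
    using Phi_rec[of "\<lambda>j. uu \<theta> ^ j" n] Phi_u_Suc[of \<theta> n] by simp
  show ?thesis unfolding pp_def e by (simp add: field_simps power_add)
qed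

lemma norm_Phi_u: "norm (Phi (\<lambda>j. uu \<theta> ^ j) n) \<le> Cn n"
proof -
  have "norm (Phi (\<lambda>j. uu \<theta> ^ j) n) \<le> (\<Sum>c\<in>compositions n. norm (uu \<theta> ^ da c))"
    unfolding Phi_def by (rule norm_sum)
  also have "\<dots> = Cn n" by (simp add: uu_def norm_power Cn_card)
  finally show ?thesis .
qed

lemma Cn_le: "Cn n \<le> 2 ^ n"
proof (cases n)
  case 0 then show ?thesis by (simp add: Cn_small)
next
  case (Suc m) then show ?thesis using Cn_closed[of m] by simp
qed

lemma pp_bound: "norm (pp \<theta> n) \<le> 1"
  unfolding pp_def norm_divide using norm_Phi_u[of \<theta> n] Cn_le[of n]
  by (simp add: norm_power)

lemma pp_small: "pp \<theta> 1 = 1 / 2" "pp \<theta> 2 = 1 / 2" "pp \<theta> 3 = (1 + uu \<theta>) / 4"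
proof -
  show "pp \<theta> 1 = 1 / 2" unfolding pp_def Phi_1 by simp
  show "pp \<theta> 2 = 1 / 2" unfolding pp_def Phi_2 by simp
  have "pp \<theta> 3 = pp \<theta> 2 / 2 + pp \<theta> 1 / 2 - (1 - uu \<theta>) * pp \<theta> 0 / 4"
    using pp_rec[of \<theta> 0] by (simp only: add_0)
  moreover have "pp \<theta> 0 = 1" unfolding pp_def by (simp add: Phi_0)
  ultimately show "pp \<theta> 3 = (1 + uu \<theta>) / 4"
    unfolding \<open>pp \<theta> 1 = 1 / 2\<close> \<open>pp \<theta> 2 = 1 / 2\<close> by (simp add: field_simps)
qed

lemma pp_small_Suc: "pp \<theta> (Suc 0) = 1 / 2" "pp \<theta> (Suc (Suc 0)) = 1 / 2"
  using pp_small(1,2)[of \<theta>] by (simp_all add: numeral_2_eq_2)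

lemma pp_approx:
  assumes "\<bar>\<theta>\<bar> \<le> 1 / 48"
  shows "norm (pp \<theta> (n + 1) - lam \<theta> ^ n / 2) \<le> 12 * \<bar>\<theta>\<bar> + 6 * real n * \<bar>\<theta>\<bar> ^ 3"
proof -
  have t1: "\<bar>\<theta>\<bar> \<le> 1" using assms by simp
  have l1: "norm (lam \<theta> - 1) \<le> \<bar>\<theta>\<bar>" by (rule lam_minus_1[OF t1])
  have u1: "norm (uu \<theta> - 1) \<le> 3 * \<bar>\<theta>\<bar>"
    unfolding uu_def using exp_taylor1[of "\<i> * of_real \<theta>"] t1 by (simp add: norm_mult)
  have main: "norm (pp \<theta> (n + 1) - lam \<theta> ^ n * pp \<theta> 1)
    \<le> 4 * (norm (pp \<theta> 2 - lam \<theta> * pp \<theta> 1) + 2 * norm (pp \<theta> 3 - lam \<theta> * pp \<theta> 2)) + 3 * real n * norm (Gerr \<theta>)"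
    by (rule seq_main[OF pp_rec pp_bound lam_norm]) (use l1 assms in \<open>auto simp: Gerr_def uu_def\<close>)
  have r0: "norm (pp \<theta> 2 - lam \<theta> * pp \<theta> 1) \<le> \<bar>\<theta>\<bar> / 2"
  proof -
    have "pp \<theta> 2 - lam \<theta> * pp \<theta> 1 = - (lam \<theta> - 1) / 2" unfolding pp_small by (simp add: field_simps)
    then show ?thesis using l1 by (subst \<open>pp \<theta> 2 - lam \<theta> * pp \<theta> 1 = - (lam \<theta> - 1) / 2\<close>) (simp add: norm_divide norm_minus_commute)
  qed
  have r1: "norm (pp \<theta> 3 - lam \<theta> * pp \<theta> 2) \<le> 5 * \<bar>\<theta>\<bar> / 4"
  proof -
    have eq: "pp \<theta> 3 - lam \<theta> * pp \<theta> 2 = ((uu \<theta> - 1) - 2 * (lam \<theta> - 1)) / 4"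
      unfolding pp_small by (simp add: field_simps)
    have nX: "norm ((uu \<theta> - 1) - 2 * (lam \<theta> - 1)) \<le> 3 * \<bar>\<theta>\<bar> + 2 * \<bar>\<theta>\<bar>"
    proof -
      have A: "norm ((uu \<theta> - 1) - 2 * (lam \<theta> - 1)) \<le> norm (uu \<theta> - 1) + norm (2 * (lam \<theta> - 1))"
        by (rule norm_triangle_ineq4)
      have B: "norm (2 * (lam \<theta> - 1)) = 2 * norm (lam \<theta> - 1)" by (simp only: norm_mult) simp
      show ?thesis using A B u1 l1 by linarith
    qed
    show ?thesis unfolding eq norm_divide using nX by simp
  qed
  have g: "norm (Gerr \<theta>) \<le> 2 * \<bar>\<theta>\<bar> ^ 3" by (rule Gerr_bound[OF t1])
  have "3 * real n * norm (Gerr \<theta>) \<le> 3 * real n * (2 * \<bar>\<theta>\<bar> ^ 3)"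
    using g by (intro mult_left_mono) auto
  then have gg: "3 * real n * norm (Gerr \<theta>) \<le> 6 * real n * \<bar>\<theta>\<bar> ^ 3" by simp
  have h: "lam \<theta> ^ n * pp \<theta> 1 = lam \<theta> ^ n / 2" unfolding pp_small by simp
  have "norm (pp \<theta> (n + 1) - lam \<theta> ^ n / 2)
    \<le> 4 * (norm (pp \<theta> 2 - lam \<theta> * pp \<theta> 1) + 2 * norm (pp \<theta> 3 - lam \<theta> * pp \<theta> 2)) + 3 * real n * norm (Gerr \<theta>)"
    using main unfolding h .
  also have "\<dots> \<le> 4 * (\<bar>\<theta>\<bar> / 2 + 2 * (5 * \<bar>\<theta>\<bar> / 4)) + 6 * real n * \<bar>\<theta>\<bar> ^ 3"
    using r0 r1 gg by (intro add_mono mult_left_mono) auto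
  also have "\<dots> = 12 * \<bar>\<theta>\<bar> + 6 * real n * \<bar>\<theta>\<bar> ^ 3" by simp
  finally show ?thesis .
qed


lemma iexp_split:
  "iexp (s * ((real d - E) / \<sigma>)) = exp (- (\<i> * of_real (s / \<sigma>) * of_real E)) * uu (s / \<sigma>) ^ d"
proof -
  define t where "t = s / \<sigma>"
  have e1: "s * ((real d - E) / \<sigma>) = real d * t - t * E"
    unfolding t_def by (cases "\<sigma> = 0") (simp_all add: field_simps)
  have e2: "\<i> * complex_of_real (real d * t - t * E)
      = of_nat d * (\<i> * of_real t) + (- (\<i> * of_real t * of_real E))"
    by (simp add: algebra_simps)
  show ?thesis unfolding t_def[symmetric] e1 e2 exp_add exp_of_nat_mult uu_def
    by (simp only: mult.commute)
qed

lemma char_eq: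
  "char (distr (measure_pmf (comp_pmf N)) borel (\<lambda>c. (real (da c) - E) / \<sigma>)) s
   = exp (- (\<i> * of_real (s / \<sigma>) * of_real E)) * Phi (\<lambda>j. uu (s / \<sigma>) ^ j) N / of_real (Cn N)"
proof -
  have "char (distr (measure_pmf (comp_pmf N)) borel (\<lambda>c. (real (da c) - E) / \<sigma>)) s
      = integral\<^sup>L (measure_pmf (comp_pmf N)) (\<lambda>c. iexp (s * ((real (da c) - E) / \<sigma>)))"
    unfolding char_def by (subst integral_distr) auto
  also have "\<dots> = (\<Sum>c\<in>compositions N. iexp (s * ((real (da c) - E) / \<sigma>))) / of_nat (card (compositions N))"
  proof -
    have "integral\<^sup>L (measure_pmf (comp_pmf N)) (\<lambda>c. iexp (s * ((real (da c) - E) / \<sigma>)))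
      = (\<Sum>c\<in>compositions N. pmf (comp_pmf N) c *\<^sub>R iexp (s * ((real (da c) - E) / \<sigma>)))"
      by (rule integral_measure_pmf[OF finite_compositions])
        (simp add: comp_pmf_def compositions_ne finite_compositions)
    also have "\<dots> = (\<Sum>c\<in>compositions N. iexp (s * ((real (da c) - E) / \<sigma>)) / of_nat (card (compositions N)))"
      by (intro sum.cong refl) (simp add: comp_pmf_def compositions_ne finite_compositions scaleR_conv_of_real)
    finally show ?thesis by (simp add: sum_divide_distrib)
  qed
  also have "(\<Sum>c\<in>compositions N. iexp (s * ((real (da c) - E) / \<sigma>)))
      = exp (- (\<i> * of_real (s / \<sigma>) * of_real E)) * Phi (\<lambda>j. uu (s / \<sigma>) ^ j) N"
    unfolding iexp_split Phi_def by (simp add: sum_distrib_left)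
  finally show ?thesis by (simp add: Cn_card)
qed


lemma ev_ge: "eventually (\<lambda>n. k \<le> n) sequentially"
  by (rule eventually_ge_at_top)

lemma V_over_n: "(\<lambda>n. VX_da (Suc n) / real (Suc n)) \<longlonglongrightarrow> 5 / 108"
proof -
  have "(\<lambda>n. VX_da (Suc n) / real (Suc n) - 5 / 108) \<longlonglongrightarrow> 0"
  proof (rule Lim_null_comparison)
    show "eventually (\<lambda>n. norm (VX_da (Suc n) / real (Suc n) - 5 / 108) \<le> 8 / real (Suc n)) sequentially"
      using ev_ge[of 2]
    proof eventually_elim
      case (elim n)
      have b: "\<bar>VX_da (Suc n) - 5 * real (Suc n) / 108\<bar> \<le> 8" using VX_bound[of "Suc n"] elim by simp
      have "VX_da (Suc n) / real (Suc n) - 5 / 108 = (VX_da (Suc n) - 5 * real (Suc n) / 108) / real (Suc n)"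
        by (simp add: field_simps)
      then show ?case using b by (simp add: divide_right_mono)
    qed
    show "(\<lambda>n. 8 / real (Suc n)) \<longlonglongrightarrow> 0"
      using LIMSEQ_Suc[OF lim_const_over_n[of "8::real"]] by simp
  qed
  then show ?thesis by (simp add: LIM_zero_iff)
qed

lemma n_over_V: "(\<lambda>n. real n / VX_da (Suc n)) \<longlonglongrightarrow> 108 / 5"
proof -
  have "(\<lambda>n. (real n / real (Suc n)) / (VX_da (Suc n) / real (Suc n))) \<longlonglongrightarrow> 1 / (5 / 108)"
    by (intro tendsto_divide V_over_n LIMSEQ_n_over_Suc_n) auto
  moreover have "(real n / real (Suc n)) / (VX_da (Suc n) / real (Suc n)) = real n / VX_da (Suc n)" for n
    by (simp add: divide_divide_eq_right)
  ultimately show ?thesis by simp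
qed

lemma V_pos: "eventually (\<lambda>n. 0 < VX_da (Suc n)) sequentially"
  using ev_ge[of 200]
proof eventually_elim
  case (elim n)
  have "\<bar>VX_da (Suc n) - 5 * real (Suc n) / 108\<bar> \<le> 8" using VX_bound[of "Suc n"] elim by simp
  then have "VX_da (Suc n) \<ge> 5 * real (Suc n) / 108 - 8" by (simp add: abs_le_iff)
  moreover have "real (Suc n) \<ge> 201" using elim by simp
  moreover have "\<And>x v::real. 5 * x / 108 - 8 \<le> v \<Longrightarrow> 201 \<le> x \<Longrightarrow> 0 < v" by linarith
  ultimately show ?case by blast
qed


definition th :: "real \<Rightarrow> nat \<Rightarrow> real" where
  "th s n = s / sqrt (VX_da (Suc n))"

lemma n_th2: "(\<lambda>n. real n * th s n ^ 2) \<longlonglongrightarrow> 108 / 5 * s^2"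
proof -
  have "(\<lambda>n. s^2 * (real n / VX_da (Suc n))) \<longlonglongrightarrow> s^2 * (108 / 5)"
    by (intro tendsto_mult tendsto_const n_over_V)
  moreover have "eventually (\<lambda>n. s^2 * (real n / VX_da (Suc n)) = real n * th s n ^ 2) sequentially"
    using V_pos
  proof eventually_elim
    case (elim n)
    then show ?case unfolding th_def by (simp add: power_divide real_sqrt_pow2 less_imp_le)
  qed
  ultimately show ?thesis by (simp add: Lim_transform_eventually mult.commute)
qed

lemma th_0: "th s \<longlonglongrightarrow> 0"
proof -
  have "(\<lambda>n. (real n * th s n ^ 2) * (1 / real n)) \<longlonglongrightarrow> (108 / 5 * s^2) * 0"
    by (intro tendsto_mult n_th2 lim_const_over_n)
  moreover have "eventually (\<lambda>n. (real n * th s n ^ 2) * (1 / real n) = th s n ^ 2) sequentially"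
    using ev_ge[of 1] by eventually_elim simp
  ultimately have "(\<lambda>n. th s n ^ 2) \<longlonglongrightarrow> 0" by (simp add: Lim_transform_eventually)
  then have "(\<lambda>n. sqrt (th s n ^ 2)) \<longlonglongrightarrow> sqrt 0" by (rule tendsto_real_sqrt)
  then have "(\<lambda>n. \<bar>th s n\<bar>) \<longlonglongrightarrow> 0" by simp
  then show ?thesis by (rule tendsto_rabs_zero_cancel)
qed

lemma n_th3: "(\<lambda>n. real n * \<bar>th s n\<bar> ^ 3) \<longlonglongrightarrow> 0"
proof -
  have "(\<lambda>n. (real n * th s n ^ 2) * \<bar>th s n\<bar>) \<longlonglongrightarrow> (108 / 5 * s^2) * 0"
    by (intro tendsto_mult n_th2 tendsto_rabs_zero th_0)
  moreover have "(real n * th s n ^ 2) * \<bar>th s n\<bar> = real n * \<bar>th s n\<bar> ^ 3" for n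
  proof -
    have "th s n ^ 2 = \<bar>th s n\<bar> ^ 2" by simp
    then show ?thesis by (simp only: power2_eq_square power3_eq_cube mult.assoc)
  qed
  ultimately show ?thesis by simp
qed


lemma char_conv:
  "(\<lambda>n. char (distr (measure_pmf (comp_pmf (Suc n))) borel
       (\<lambda>c. (real (da c) - EX_da (Suc n)) / sqrt (VX_da (Suc n)))) s)
   \<longlonglongrightarrow> complex_of_real (exp (- (s^2) / 2))"
proof -
  define t where "t n = th s n" for n
  define E where "E n = EX_da (Suc n)" for n
  define A where "A n = exp (- (\<i> * of_real (t n) * of_real (E n)))" for n
  define ch where "ch n = char (distr (measure_pmf (comp_pmf (Suc n))) borel
       (\<lambda>c. (real (da c) - EX_da (Suc n)) / sqrt (VX_da (Suc n)))) s" for n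
  define Z where "Z n = \<i> * of_real (t n * (real n / 6 - E n)) - of_real (5 / 216 * (real n * t n ^ 2))" for n
  have nA: "norm (A n) = 1" for n unfolding A_def by simp
  have ch_eq: "ch n = A n * (2 * pp (t n) (n + 1))" for n
  proof -
    have "ch n = A n * Phi (\<lambda>j. uu (t n) ^ j) (Suc n) / of_real (Cn (Suc n))"
      unfolding ch_def A_def E_def t_def th_def by (rule char_eq)
    also have "Cn (Suc n) = 2 ^ n" using Cn_closed[of n] by simp
    finally show ?thesis unfolding pp_def by (simp add: field_simps)
  qed
  have T_eq: "A n * lam (t n) ^ n = exp (Z n)" for n
  proof -
    have "A n * lam (t n) ^ n = exp (- (\<i> * of_real (t n) * of_real (E n))
        + of_nat n * (\<i> * of_real (t n) / 6 - 5 * of_real (t n) ^ 2 / 216))"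
      unfolding A_def lam_def by (simp only: exp_add exp_of_nat_mult)
    also have "- (\<i> * of_real (t n) * of_real (E n)) + of_nat n * (\<i> * of_real (t n) / 6 - 5 * of_real (t n) ^ 2 / 216)
        = Z n" unfolding Z_def by (simp add: algebra_simps)
    finally show ?thesis .
  qed
  have t0: "t \<longlonglongrightarrow> 0" unfolding t_def by (rule th_0)
  have diff: "(\<lambda>n. ch n - exp (Z n)) \<longlonglongrightarrow> 0"
  proof (rule Lim_null_comparison)
    have "eventually (\<lambda>n. \<bar>t n\<bar> < 1 / 48) sequentially"
      using t0 by (rule order_tendstoD(2)[OF tendsto_rabs_zero, of t, simplified]) simp
    then show "eventually (\<lambda>n. norm (ch n - exp (Z n)) \<le> 2 * (12 * \<bar>t n\<bar> + 6 * real n * \<bar>t n\<bar> ^ 3)) sequentially"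
    proof eventually_elim
      case (elim n)
      have e: "ch n - exp (Z n) = A n * (2 * (pp (t n) (n + 1) - lam (t n) ^ n / 2))"
        unfolding ch_eq T_eq[symmetric] by (simp add: algebra_simps)
      have "norm (A n * (2 * (pp (t n) (n + 1) - lam (t n) ^ n / 2))) = 2 * norm (pp (t n) (n + 1) - lam (t n) ^ n / 2)"
        by (simp only: norm_mult nA) simp
      then have "norm (ch n - exp (Z n)) = 2 * norm (pp (t n) (n + 1) - lam (t n) ^ n / 2)"
        unfolding e .
      also have "\<dots> \<le> 2 * (12 * \<bar>t n\<bar> + 6 * real n * \<bar>t n\<bar> ^ 3)"
        using pp_approx[of "t n" n] elim by simp
      finally show ?case .
    qed
    have "(\<lambda>n. 2 * (12 * \<bar>t n\<bar> + 6 * (real n * \<bar>t n\<bar> ^ 3))) \<longlonglongrightarrow> 2 * (12 * 0 + 6 * 0)"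
      using n_th3[of s] t0 unfolding t_def[symmetric]
      by (intro tendsto_intros tendsto_rabs_zero) auto
    then show "(\<lambda>n. 2 * (12 * \<bar>t n\<bar> + 6 * real n * \<bar>t n\<bar> ^ 3)) \<longlonglongrightarrow> 0"
      by (simp add: mult.assoc)
  qed
  have Zlim: "Z \<longlonglongrightarrow> - complex_of_real (s^2 / 2)"
  proof -
    have a: "(\<lambda>n. t n * (real n / 6 - E n)) \<longlonglongrightarrow> 0"
    proof (rule Lim_null_comparison)
      show "eventually (\<lambda>n. norm (t n * (real n / 6 - E n)) \<le> 7 / 6 * \<bar>t n\<bar>) sequentially"
        using ev_ge[of 2]
      proof eventually_elim
        case (elim n)
        have "\<bar>EX_da (Suc n) - real (Suc n) / 6\<bar> \<le> 1" using EX_bound[of "Suc n"] elim by simp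
        then have "\<bar>real n / 6 - E n\<bar> \<le> 7 / 6" unfolding E_def by (simp add: abs_le_iff field_simps)
        then have "\<bar>t n\<bar> * \<bar>real n / 6 - E n\<bar> \<le> \<bar>t n\<bar> * (7 / 6)" by (intro mult_left_mono) auto
        then show ?case by (simp add: abs_mult mult.commute)
      qed
      show "(\<lambda>n. 7 / 6 * \<bar>t n\<bar>) \<longlonglongrightarrow> 0"
        using tendsto_mult[OF tendsto_const tendsto_rabs_zero[OF t0], of "7/6"] by simp
    qed
    have b: "(\<lambda>n. 5 / 216 * (real n * t n ^ 2)) \<longlonglongrightarrow> 5 / 216 * (108 / 5 * s^2)"
      unfolding t_def by (intro tendsto_mult tendsto_const n_th2)
    have "Z \<longlonglongrightarrow> \<i> * of_real 0 - of_real (5 / 216 * (108 / 5 * s^2))"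
      unfolding Z_def by (intro tendsto_intros a b)
    then show ?thesis by simp
  qed
  have "(\<lambda>n. exp (Z n)) \<longlonglongrightarrow> exp (- complex_of_real (s^2 / 2))"
    by (intro tendsto_intros Zlim)
  then have "(\<lambda>n. (ch n - exp (Z n)) + exp (Z n)) \<longlonglongrightarrow> 0 + exp (- complex_of_real (s^2 / 2))"
    by (intro tendsto_add diff)
  moreover have "exp (- complex_of_real (s^2 / 2)) = complex_of_real (exp (- (s^2) / 2))"
    by (simp add: exp_of_real[symmetric])
  ultimately show ?thesis unfolding ch_def by simp
qed


theorem corollary2p3:
  shows "weak_conv_m
           (\<lambda>n. distr (measure_pmf (comp_pmf (Suc n))) borel
                   (\<lambda>c. (real (da c) - EX_da (Suc n)) / sqrt (VX_da (Suc n))))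
           std_normal_distribution
         \<and> (\<lambda>n. EX_da n - real n / 6) \<in> O(\<lambda>_. 1)
         \<and> (\<lambda>n. VX_da n - 5 * real n / 108) \<in> O(\<lambda>_. 1)"
proof (intro conjI)
  show "weak_conv_m
           (\<lambda>n. distr (measure_pmf (comp_pmf (Suc n))) borel
                   (\<lambda>c. (real (da c) - EX_da (Suc n)) / sqrt (VX_da (Suc n))))
           std_normal_distribution"
  proof (rule levy_continuity)
    fix n
    show "real_distribution (distr (measure_pmf (comp_pmf (Suc n))) borel
                   (\<lambda>c. (real (da c) - EX_da (Suc n)) / sqrt (VX_da (Suc n))))"
      by (intro prob_space.real_distribution_distr prob_space_measure_pmf) simp
  next
    show "real_distribution std_normal_distribution" by (rule real_dist_normal_dist)
  next
    fix t
    show "(\<lambda>n. char (distr (measure_pmf (comp_pmf (Suc n))) borel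
                   (\<lambda>c. (real (da c) - EX_da (Suc n)) / sqrt (VX_da (Suc n)))) t)
          \<longlonglongrightarrow> char std_normal_distribution t"
      unfolding char_std_normal_distribution by (rule char_conv)
  qed
  show "(\<lambda>n. EX_da n - real n / 6) \<in> O(\<lambda>_. 1)"
  proof (rule bigoI[where c = 1])
    show "eventually (\<lambda>n. norm (EX_da n - real n / 6) \<le> 1 * norm (1::real)) at_top"
      using eventually_ge_at_top[of "3::nat"] by eventually_elim (use EX_bound in auto)
  qed
  show "(\<lambda>n. VX_da n - 5 * real n / 108) \<in> O(\<lambda>_. 1)"
  proof (rule bigoI[where c = 8])
    show "eventually (\<lambda>n. norm (VX_da n - 5 * real n / 108) \<le> 8 * norm (1::real)) at_top"
      using eventually_ge_at_top[of "3::nat"] by eventually_elim (use VX_bound in auto)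
  qed
qed

end
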